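(* Let $V$ be a finite-dimensional complex vector space, $\alpha\in\mathfrak{gl}(V)$, and $\mathfrak{h}=V\rtimes_\alpha\mathbb{C}$ the Lie algebra $V\oplus\mathbb{C}u$ in which $V$ is an abelian ideal and $[u,v]=\alpha(v)$ for $v\in V$. Fix a basis of $V$ in which $\alpha$ is in Jordan normal form: each $r$-Jordan block $V(\lambda)$ of eigenvalue $\lambda$ has basis $z_1,\dots,z_r$ with $\alpha z_1=\lambda z_1$ and $\alpha z_k=\lambda z_k+z_{k-1}$ for $1<k\le r$. Let $\{H,X_+,X_-\}$ be the standard basis of $\mathfrak{sl}_2$, with $H=\mathrm{diag}(1,-1)$, $[X_+,X_-]=H$, $[H,X_\epsilon]=2\epsilon X_\epsilon$. When $\mathfrak{h}$ is not nilpotent, define the regular function $f$ on $\mathrm{Hom}(\mathfrak{h},\mathfrak{sl}_2)$ by $f(\varphi)=\prod_{\lambda}(\det\varphi(u)+\lambda^2/4)$, the product over the non-zero eigenvalues $\lambda$ of $\alpha$. Then: (1) Assume $\mathfrak{h}$ is not nilpotent. A linear map $\varphi$ lies in $\mathrm{rep}(\mathfrak{h},\mathfrak{sl}_2)\setminus\mathrm{rep}^1(\mathfrak{h},\mathfrak{sl}_2)$ if and only if there exist a non-zero eigenvalue $\lambda$ of $\alpha$ and $\epsilon\in\{\pm1\}$ such that, after conjugating $\varphi$ by an element of $\mathrm{GL}_2(\mathbb{C})$: $\varphi u=\frac{\lambda}{2\epsilon}H$; $\varphi=0$ on each Jordan block $V(\lambda')$ with $\lambda'\neq\lambda$; on each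 $r$-Jordan block $V(\lambda)$, $\varphi z_k=t_kX_\epsilon$ for $1\le k\le r$ with $t_k\in\mathbb{C}$ and $t_k=0$ for $k<r$; and $t_r\neq 0$ for at least one such block $V(\lambda)$. Furthermore, in this situation $f(\varphi)=0$. (2) $\mathrm{rep}(\mathfrak{h},\mathfrak{sl}_2)=\mathrm{rep}^1(\mathfrak{h},\mathfrak{sl}_2)$ if and only if $\mathfrak{h}$ is nilpotent.
   Context: $\mathrm{rep}(\mathfrak{h},\mathfrak{sl}_2)\subseteq\mathrm{Hom}(\mathfrak{h},\mathfrak{sl}_2)$ is the variety of Lie algebra homomorphisms, and $\mathrm{rep}^1(\mathfrak{h},\mathfrak{sl}_2)=\{\varphi\in\mathrm{rep}(\mathfrak{h},\mathfrak{sl}_2):\mathrm{rank}\,\varphi\le1\}$. *)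

theory Defs
  imports "HOL-Analysis.Analysis"
begin

text \<open>The Jordan data of alpha is a list bs of blocks (lambda_j, r_j), r_j >= 1.
  V has basis z(j,k) with j < length bs and 1 <= k <= r_j; alpha z(j,1) = lambda_j z(j,1),
  alpha z(j,k) = lambda_j z(j,k) + z(j,k-1). Vectors of V are coefficient functions
  nat \<times> nat \<Rightarrow> complex vanishing outside the index set; elements of h = V + C u are pairs (v, c).\<close>

type_synonym hel = "(nat \<times> nat \<Rightarrow> complex) \<times> complex"
type_synonym mat2 = "complex ^ 2 ^ 2"

definition idx :: "(complex \<times> nat) list \<Rightarrow> (nat \<times> nat) set" where
  "idx bs = {(j, k). j < length bs \<and> 1 \<le> k \<and> k \<le> snd (bs ! j)}"

definition Vcar :: "(complex \<times> nat) list \<Rightarrow> (nat \<times> nat \<Rightarrow> complex) set" where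
  "Vcar bs = {v. \<forall>p. p \<notin> idx bs \<longrightarrow> v p = 0}"

definition hcar :: "(complex \<times> nat) list \<Rightarrow> hel set" where
  "hcar bs = {(v, c). v \<in> Vcar bs}"

definition alpha :: "(complex \<times> nat) list \<Rightarrow> (nat \<times> nat \<Rightarrow> complex) \<Rightarrow> (nat \<times> nat \<Rightarrow> complex)" where
  "alpha bs v = (\<lambda>(j, k). if (j, k) \<in> idx bs then fst (bs ! j) * v (j, k) + v (j, Suc k) else 0)"

definition hadd :: "hel \<Rightarrow> hel \<Rightarrow> hel" where
  "hadd x y = (\<lambda>p. fst x p + fst y p, snd x + snd y)"

definition hscale :: "complex \<Rightarrow> hel \<Rightarrow> hel" where
  "hscale a x = (\<lambda>p. a * fst x p, a * snd x)"

definition hzero :: hel where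
  "hzero = (\<lambda>p. 0, 0)"

definition hbr :: "(complex \<times> nat) list \<Rightarrow> hel \<Rightarrow> hel \<Rightarrow> hel" where
  "hbr bs x y = (\<lambda>p. snd x * alpha bs (fst y) p - snd y * alpha bs (fst x) p, 0)"

definition uel :: hel where
  "uel = (\<lambda>p. 0, 1)"

definition zel :: "nat \<Rightarrow> nat \<Rightarrow> hel" where
  "zel j k = (\<lambda>p. if p = (j, k) then 1 else 0, 0)"

fun brk_iter :: "(complex \<times> nat) list \<Rightarrow> hel list \<Rightarrow> hel \<Rightarrow> hel" where
  "brk_iter bs [] x = x"
| "brk_iter bs (y # ys) x = hbr bs y (brk_iter bs ys x)"

definition h_nilpotent :: "(complex \<times> nat) list \<Rightarrow> bool" where
  "h_nilpotent bs = (\<exists>n. \<forall>xs x. length xs = n \<and> set xs \<subseteq> hcar bs \<and> x \<in> hcar bs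
       \<longrightarrow> brk_iter bs xs x = hzero)"

definition is_eigenvalue :: "(complex \<times> nat) list \<Rightarrow> complex \<Rightarrow> bool" where
  "is_eigenvalue bs l = (\<exists>v \<in> Vcar bs. v \<noteq> (\<lambda>p. 0) \<and> alpha bs v = (\<lambda>p. l * v p))"

text \<open>sl_2 as traceless 2x2 complex matrices.\<close>
definition msc :: "complex \<Rightarrow> mat2 \<Rightarrow> mat2" where
  "msc c A = (\<chi> i j. c * A $ i $ j)"

definition mbr :: "mat2 \<Rightarrow> mat2 \<Rightarrow> mat2" where
  "mbr A B = A ** B - B ** A"

definition Hm :: mat2 where
  "Hm = (\<chi> i j. if i = j then (if i = 1 then 1 else -1) else 0)"

definition Xp :: mat2 where
  "Xp = (\<chi> i j. if i = 1 \<and> j = 2 then 1 else 0)"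

definition Xm :: mat2 where
  "Xm = (\<chi> i j. if i = 2 \<and> j = 1 then 1 else 0)"

definition Xe :: "int \<Rightarrow> mat2" where
  "Xe e = (if e = 1 then Xp else Xm)"

definition hom :: "(complex \<times> nat) list \<Rightarrow> (hel \<Rightarrow> mat2) \<Rightarrow> bool" where
  "hom bs \<phi> = ((\<forall>x \<in> hcar bs. \<forall>y \<in> hcar bs. \<phi> (hadd x y) = \<phi> x + \<phi> y)
     \<and> (\<forall>a. \<forall>x \<in> hcar bs. \<phi> (hscale a x) = msc a (\<phi> x))
     \<and> (\<forall>x \<in> hcar bs. trace (\<phi> x) = 0))"

definition rep :: "(complex \<times> nat) list \<Rightarrow> (hel \<Rightarrow> mat2) \<Rightarrow> bool" where
  "rep bs \<phi> = (hom bs \<phi> \<and> (\<forall>x \<in> hcar bs. \<forall>y \<in> hcar bs. \<phi> (hbr bs x y) = mbr (\<phi> x) (\<phi> y)))"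

text \<open>rank phi <= 1: the image lies in a line.\<close>
definition rep1 :: "(complex \<times> nat) list \<Rightarrow> (hel \<Rightarrow> mat2) \<Rightarrow> bool" where
  "rep1 bs \<phi> = (rep bs \<phi> \<and> (\<exists>M. \<forall>x \<in> hcar bs. \<exists>c. \<phi> x = msc c M))"

definition ffun :: "(complex \<times> nat) list \<Rightarrow> (hel \<Rightarrow> mat2) \<Rightarrow> complex" where
  "ffun bs \<phi> = (\<Prod>l \<in> {l. is_eigenvalue bs l \<and> l \<noteq> 0}. det (\<phi> uel) + l ^ 2 / 4)"

end

theory Submission imports Defs begin

lemma mat2_eq: "(A::mat2) = B \<longleftrightarrow> A$1$1 = B$1$1 \<and> A$1$2 = B$1$2 \<and> A$2$1 = B$2$1 \<and> A$2$2 = B$2$2"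
  by (auto simp: vec_eq_iff forall_2)

lemma mmul_nth: "((A::mat2) ** B)$i$j = A$i$1*B$1$j + A$i$2*B$2$j"
  by (simp add: matrix_matrix_mult_def sum_2)

lemma minv: assumes "invertible (P::mat2)" shows "P ** matrix_inv P = mat 1" "matrix_inv P ** P = mat 1"
proof -
  have "\<exists>A'. P ** A' = mat 1 \<and> A' ** P = mat 1" using assms by (simp add: invertible_def)
  then have "P ** matrix_inv P = mat 1 \<and> matrix_inv P ** P = mat 1"
    unfolding matrix_inv_def by (rule someI_ex)
  then show "P ** matrix_inv P = mat 1" "matrix_inv P ** P = mat 1" by auto
qed

lemma conj_iff: assumes "invertible (P::mat2)" shows "P ** X ** matrix_inv P = Y \<longleftrightarrow> P ** X = Y ** P"
proof
  assume "P ** X ** matrix_inv P = Y"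
  then have "P ** X ** matrix_inv P ** P = Y ** P" by simp
  then show "P ** X = Y ** P" by (simp add: matrix_mul_assoc[symmetric] minv[OF assms])
next
  assume "P ** X = Y ** P"
  then show "P ** X ** matrix_inv P = Y" by (simp add: matrix_mul_assoc[symmetric] minv[OF assms])
qed

lemma trace2: "trace (A::mat2) = A$1$1 + A$2$2" by (simp add: trace_def sum_2)

lemma msc_nth[simp]: "msc c A $ i $ j = c * A $ i $ j" by (simp add: msc_def)
lemma Hm_nth: "Hm$1$1 = 1" "Hm$1$2 = 0" "Hm$2$1 = 0" "Hm$2$2 = -1" by (simp_all add: Hm_def)
lemma Xp_nth: "Xp$1$1 = 0" "Xp$1$2 = 1" "Xp$2$1 = 0" "Xp$2$2 = 0" by (simp_all add: Xp_def)
lemma Xm_nth: "Xm$1$1 = 0" "Xm$1$2 = 0" "Xm$2$1 = 1" "Xm$2$2 = 0" by (simp_all add: Xm_def)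
lemma mat1_nth: "(mat 1::mat2)$1$1 = 1" "(mat 1::mat2)$1$2 = 0" "(mat 1::mat2)$2$1 = 0" "(mat 1::mat2)$2$2 = 1"
  by (simp_all add: mat_def)

lemma mbr_nth: "mbr A B $ i $ j = (A ** B)$i$j - (B ** A)$i$j" by (simp add: mbr_def)

lemma tr0: "trace (B::mat2) = 0 \<Longrightarrow> B$2$2 = - B$1$1"
  by (simp add: trace2 eq_neg_iff_add_eq_0 add.commute)

lemma commute_mult:
  fixes B C :: mat2
  assumes "trace B = 0" "trace C = 0" "B \<noteq> 0" "mbr C B = 0"
  shows "\<exists>c. C = msc c B"
proof -
  have B22: "B$2$2 = -B$1$1" and C22: "C$2$2 = -C$1$1" using assms(1,2) tr0 by auto
  have "mbr C B $1$1 = 0" "mbr C B $1$2 = 0" "mbr C B $2$1 = 0" using assms(4) by simp_all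
  then have e1: "C$1$2*B$2$1 - B$1$2*C$2$1 = 0" and e2: "C$1$1*B$1$2 = B$1$1*C$1$2" and e3: "C$2$1*B$1$1 = B$2$1*C$1$1"
    by (simp_all add: mbr_nth mmul_nth B22 C22 algebra_simps)
  have nz: "B$1$1 \<noteq> 0 \<or> B$1$2 \<noteq> 0 \<or> B$2$1 \<noteq> 0" using assms(3) B22 by (auto simp: mat2_eq)
  show ?thesis
  proof (cases "B$1$1 \<noteq> 0")
    case True
    show ?thesis
      apply (rule exI[of _ "C$1$1/B$1$1"])
      using True e1 e2 e3 B22 C22 by (simp add: mat2_eq field_simps)
  next
    case False
    note a0 = this
    show ?thesis
    proof (cases "B$1$2 \<noteq> 0")
      case True
      show ?thesis
        apply (rule exI[of _ "C$1$2/B$1$2"])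
        using True a0 e1 e2 e3 B22 C22 by (simp add: mat2_eq field_simps)
    next
      case False
      then have "B$2$1 \<noteq> 0" using nz a0 by auto
      then show ?thesis
        apply -
        apply (rule exI[of _ "C$2$1/B$2$1"])
        using False a0 e1 e2 e3 B22 C22 by (simp add: mat2_eq field_simps)
    qed
  qed
qed

lemma nf_alg:
  fixes x y z a b c \<mu> :: complex
  assumes h1: "y*c = \<mu>*a + b*z" and h2: "2*(x*b) = \<mu>*b + 2*(a*y)" and h3: "2*(a*z) = \<mu>*c + 2*(x*c)"
    and h4: "a*a + b*c = 0" and c: "c \<noteq> 0"
  shows "\<mu> * (z*c) + 2*(x*(z*c)) = 2*(a*(z*z))"
    "\<mu> * (\<mu> * (a * (z * c))) + (\<mu> * (2 * (x * (a * (z * c)))) + \<mu> * (2 * (y * (z * (c * c))))) = \<mu> * (\<mu> * (\<mu> * (c * c))) + \<mu> * (\<mu> * (2 * (x * (c * c))))"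
    "\<mu>*a + (2*(x*a) + 2*(b*z)) = 0"
    "a*(a*z) + b*(z*c) = 0"
proof -
  show "\<mu> * (z*c) + 2*(x*(z*c)) = 2*(a*(z*z))" using h3 by algebra
  show "a*(a*z) + b*(z*c) = 0" using h4 by algebra
  have "c * (\<mu>*a + (2*(x*a) + 2*(b*z))) = 0" using h3 h4 by algebra
  then show "\<mu>*a + (2*(x*a) + 2*(b*z)) = 0" using c by simp
  have "c * c * (\<mu> * (\<mu> * (a * (z * c))) + (\<mu> * (2 * (x * (a * (z * c)))) + \<mu> * (2 * (y * (z * (c * c))))) - (\<mu> * (\<mu> * (\<mu> * (c * c))) + \<mu> * (\<mu> * (2 * (x * (c * c)))))) = 0"
    using h1 h3 h4 by algebra
  then show "\<mu> * (\<mu> * (a * (z * c))) + (\<mu> * (2 * (x * (a * (z * c)))) + \<mu> * (2 * (y * (z * (c * c))))) = \<mu> * (\<mu> * (\<mu> * (c * c))) + \<mu> * (\<mu> * (2 * (x * (c * c))))"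
    using c by simp
qed

definition mk2 :: "complex \<Rightarrow> complex \<Rightarrow> complex \<Rightarrow> complex \<Rightarrow> mat2" where
  "mk2 a b c d = (\<chi> i j. if i = 1 then (if j = 1 then a else b) else (if j = 1 then c else d))"

lemma mk2_nth[simp]: "mk2 a b c d $1$1 = a" "mk2 a b c d $1$2 = b" "mk2 a b c d $2$1 = c" "mk2 a b c d $2$2 = d"
  by (simp_all add: mk2_def)

lemma normal_form:
  fixes A M :: mat2
  assumes "trace A = 0" "trace M = 0" "M \<noteq> 0" "mbr A M = msc \<mu> M" "\<mu> \<noteq> 0"
  shows "\<exists>P t. invertible P \<and> t \<noteq> 0 \<and> P ** A = msc (\<mu>/2) Hm ** P \<and> P ** M = msc t Xp ** P"
proof -
  have A22: "A$2$2 = -A$1$1" and M22: "M$2$2 = -M$1$1" using assms(1,2) tr0 by auto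
  have "mbr A M $1$1 = \<mu> * M$1$1" "mbr A M $1$2 = \<mu> * M$1$2" "mbr A M $2$1 = \<mu> * M$2$1" using assms(4) by simp_all
  then have e1: "A$1$2*M$2$1 - M$1$2*A$2$1 = \<mu> * M$1$1" and e2: "2*(A$1$1*M$1$2 - A$1$2*M$1$1) = \<mu> * M$1$2"
     and e3: "2*(A$2$1*M$1$1 - A$1$1*M$2$1) = \<mu> * M$2$1"
    by (simp_all add: mbr_nth mmul_nth A22 M22 algebra_simps)
  have "\<mu> * (M$1$1 * M$1$1 + M$1$2 * M$2$1) = 0"
    using e1 e2 e3 by algebra
  then have nil: "M$1$1 * M$1$1 + M$1$2 * M$2$1 = 0" using assms(5) by simp
  have nz: "M$1$1 \<noteq> 0 \<or> M$1$2 \<noteq> 0 \<or> M$2$1 \<noteq> 0" using assms(3) M22 by (auto simp: mat2_eq)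
  show ?thesis
  proof (cases "M$2$1 = 0")
    case True
    then have a0: "M$1$1 = 0" using nil by simp
    then have b0: "M$1$2 \<noteq> 0" using nz True by simp
    have z0: "A$2$1 = 0" using e1 True a0 b0 by simp
    have x: "A$1$1 = \<mu>/2" using e2 a0 b0 by (simp add: field_simps)
    show ?thesis
      apply (rule exI[of _ "mk2 1 (A$1$2/\<mu>) 0 1"], rule exI[of _ "M$1$2"])
      using True a0 b0 z0 x A22 M22 assms(5)
      by (simp add: invertible_det_nz det_2 mat2_eq mmul_nth Hm_nth Xp_nth field_simps)
  next
    case False
    show ?thesis
      apply (rule exI[of _ "mk2 (A$2$1/\<mu>) (1 - M$1$1*A$2$1/(M$2$1*\<mu>)) (M$2$1) (-M$1$1)"], rule exI[of _ 1])
      using False e1 e2 e3 nil A22 M22 assms(5)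
      apply (simp add: invertible_det_nz det_2 mat2_eq mmul_nth Hm_nth Xp_nth field_simps)
      using nf_alg[where x="A$1$1" and y="A$1$2" and z="A$2$1" and a="M$1$1" and b="M$1$2" and c="M$2$1" and \<mu>=\<mu>]
      by simp
  qed
qed

lemma mm_sub_l: "(A::mat2) ** ((B::mat2) - C) = A ** B - A ** C" by (subst mat2_eq, simp add: mat2_eq mmul_nth algebra_simps)
lemma mm_sub_r: "((B::mat2) - C) ** (A::mat2) = B ** A - C ** A" by (subst mat2_eq, simp add: mat2_eq mmul_nth algebra_simps)
lemma mm_add_r: "((B::mat2) + C) ** (A::mat2) = B ** A + C ** A" by (subst mat2_eq, simp add: mat2_eq mmul_nth algebra_simps)
lemma msc_add: "msc a (A + B) = msc a A + msc a B" by (subst mat2_eq, simp add: mat2_eq algebra_simps)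
lemma msc_0[simp]: "msc 0 A = 0" by (subst mat2_eq, simp add: mat2_eq)
lemma msc_1[simp]: "msc 1 A = A" by (subst mat2_eq, simp add: mat2_eq)
lemma msc_msc: "msc a (msc b A) = msc (a*b) A" by (subst mat2_eq, simp add: mat2_eq)
lemma msc_plus: "msc a A + msc b A = msc (a+b) A" by (subst mat2_eq, simp add: mat2_eq algebra_simps)
lemma mm_msc_l: "(P::mat2) ** msc c (A::mat2) = msc c (P ** A)" by (subst mat2_eq, simp add: mat2_eq mmul_nth algebra_simps)
lemma mm_msc_r: "msc c (A::mat2) ** (P::mat2) = msc c (A ** P)" by (subst mat2_eq, simp add: mat2_eq mmul_nth algebra_simps)
lemma msc_sum: "finite S \<Longrightarrow> (\<Sum>p\<in>S. msc (f p) A) = msc (\<Sum>p\<in>S. f p) A"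
  by (induction S rule: finite_induct) (auto simp: msc_plus)
lemma msc_inj: "msc a A = msc b A \<Longrightarrow> (A::mat2) \<noteq> 0 \<Longrightarrow> a = b"
  by (auto simp: mat2_eq)
lemma mbr_msc: "mbr (A::mat2) (msc c B) = msc c (mbr A B)" by (subst mat2_eq, simp add: mat2_eq mbr_nth mmul_nth algebra_simps)
lemma conj_mbr: assumes "P ** Q = mat 1" shows "mbr (Q ** Y ** (P::mat2)) (Q ** Z ** P) = Q ** mbr Y Z ** P"
proof -
  have a: "(Q ** Y ** P) ** (Q ** Z ** P) = Q ** Y ** (P ** Q) ** Z ** P" by (simp add: matrix_mul_assoc)
  have b: "(Q ** Z ** P) ** (Q ** Y ** P) = Q ** Z ** (P ** Q) ** Y ** P" by (simp add: matrix_mul_assoc)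
  show ?thesis unfolding mbr_def a b assms by (simp add: mm_sub_l mm_sub_r matrix_mul_assoc)
qed

definition lin :: "(complex \<times> nat) list \<Rightarrow> (hel \<Rightarrow> mat2) \<Rightarrow> bool" where
  "lin bs \<phi> = ((\<forall>x \<in> hcar bs. \<forall>y \<in> hcar bs. \<phi> (hadd x y) = \<phi> x + \<phi> y)
     \<and> (\<forall>a. \<forall>x \<in> hcar bs. \<phi> (hscale a x) = msc a (\<phi> x)))"

lemma hom_lin: "hom bs \<phi> \<Longrightarrow> lin bs \<phi>" by (simp add: hom_def lin_def)

lemma hcar_iff[simp]: "(v, c) \<in> hcar bs \<longleftrightarrow> v \<in> Vcar bs" by (simp add: hcar_def)
lemma uel_hcar[simp]: "uel \<in> hcar bs" by (simp add: uel_def Vcar_def)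
lemma zel_hcar: "(j, k) \<in> idx bs \<Longrightarrow> zel j k \<in> hcar bs" by (auto simp: zel_def Vcar_def)
lemma hscale_hcar: "x \<in> hcar bs \<Longrightarrow> hscale a x \<in> hcar bs" by (auto simp: hcar_def hscale_def Vcar_def)
lemma hadd_hcar: "x \<in> hcar bs \<Longrightarrow> y \<in> hcar bs \<Longrightarrow> hadd x y \<in> hcar bs" by (auto simp: hcar_def hadd_def Vcar_def)
lemma lin_add: "lin bs \<phi> \<Longrightarrow> x \<in> hcar bs \<Longrightarrow> y \<in> hcar bs \<Longrightarrow> \<phi> (hadd x y) = \<phi> x + \<phi> y" by (simp add: lin_def)
lemma lin_scale: "lin bs \<phi> \<Longrightarrow> x \<in> hcar bs \<Longrightarrow> \<phi> (hscale a x) = msc a (\<phi> x)" by (simp add: lin_def)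
lemma hzero_eq: "hzero = hscale 0 uel" by (simp add: hzero_def hscale_def uel_def)

lemma lin_zero: "lin bs \<phi> \<Longrightarrow> \<phi> hzero = 0"
  by (simp add: lin_def hzero_eq)

lemma finite_idx: "finite (idx bs)"
proof -
  have "idx bs \<subseteq> {..<length bs} \<times> {..sum_list (map snd bs)}"
  proof
    fix p assume "p \<in> idx bs"
    then obtain j k where p: "p = (j,k)" "j < length bs" "k \<le> snd (bs!j)" by (auto simp: idx_def)
    have "snd (bs!j) \<in> set (map snd bs)" using p(2) by simp
    then have "snd (bs!j) \<le> sum_list (map snd bs)" by (intro member_le_sum_list) auto
    then show "p \<in> {..<length bs} \<times> {..sum_list (map snd bs)}" using p by auto
  qed
  then show ?thesis by (rule finite_subset) auto
qed

lemma Vcar_restr: "(\<lambda>q. if q \<in> S then v q else 0) \<in> Vcar bs" if "S \<subseteq> idx bs" for S v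
  using that by (auto simp: Vcar_def)

lemma decomp_aux:
  assumes "lin bs \<phi>" "finite S" "S \<subseteq> idx bs"
  shows "\<phi> (\<lambda>q. if q \<in> S then v q else 0, 0) = (\<Sum>p\<in>S. msc (v p) (\<phi> (zel (fst p) (snd p))))"
  using assms(2,3)
proof (induction S rule: finite_induct)
  case empty
  have "(\<lambda>q. if q \<in> {} then v q else 0, 0::complex) = hzero" by (simp add: hzero_def)
  then show ?case using lin_zero[OF assms(1)] by simp
next
  case (insert p S)
  obtain j k where p: "p = (j, k)" by force
  have pi: "(j,k) \<in> idx bs" using insert p by auto
  have eq: "(\<lambda>q. if q \<in> insert p S then v q else 0, 0::complex)
      = hadd (hscale (v p) (zel j k)) (\<lambda>q. if q \<in> S then v q else 0, 0)"
    using insert(2) p by (auto simp: hadd_def hscale_def zel_def fun_eq_iff)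
  have "\<phi> (\<lambda>q. if q \<in> insert p S then v q else 0, 0) = msc (v p) (\<phi> (zel j k)) + \<phi> (\<lambda>q. if q \<in> S then v q else 0, 0)"
    unfolding eq using assms(1) zel_hcar[OF pi] Vcar_restr[of S bs v] insert(4)
    apply (subst lin_add[OF assms(1)])
    using zel_hcar[OF pi] Vcar_restr[of S bs v] insert(4) by (auto intro: hscale_hcar simp: lin_scale[OF assms(1)])
  then show ?case using insert p by simp
qed

lemma decomp:
  assumes "lin bs \<phi>" "v \<in> Vcar bs"
  shows "\<phi> (v, 0) = (\<Sum>p\<in>idx bs. msc (v p) (\<phi> (zel (fst p) (snd p))))"
proof -
  have "v = (\<lambda>q. if q \<in> idx bs then v q else 0)" using assms(2) by (auto simp: Vcar_def)
  then have "\<phi> (v, 0) = \<phi> (\<lambda>q. if q \<in> idx bs then v q else 0, 0)" by simp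
  also have "\<dots> = (\<Sum>p\<in>idx bs. msc (v p) (\<phi> (zel (fst p) (snd p))))"
    using decomp_aux[OF assms(1) finite_idx] by simp
  finally show ?thesis .
qed

lemma split_h: "(v, c) = hadd (v, 0) (hscale c uel)"
  by (simp add: hadd_def hscale_def uel_def)

lemma lin_split: assumes "lin bs \<phi>" "v \<in> Vcar bs" shows "\<phi> (v, c) = \<phi> (v, 0) + msc c (\<phi> uel)"
proof -
  have "\<phi> (v, c) = \<phi> (hadd (v, 0) (hscale c uel))" using split_h by metis
  also have "\<dots> = \<phi> (v, 0) + msc c (\<phi> uel)"
    apply (subst lin_add[OF assms(1)])
    using assms by (auto intro: hscale_hcar simp: lin_scale[OF assms(1)])
  finally show ?thesis .
qed

lemma alpha_Vcar: "alpha bs v \<in> Vcar bs" unfolding Vcar_def alpha_def by (simp add: split_beta)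

lemma alpha_lin: "alpha bs (\<lambda>p. a * v p + b * w p) = (\<lambda>p. a * alpha bs v p + b * alpha bs w p)"
  unfolding alpha_def by (simp add: fun_eq_iff split_beta algebra_simps)

lemma hbr_uel: "hbr bs uel (v, 0) = (alpha bs v, 0)" by (simp add: hbr_def uel_def)
lemma hbr_VV: "hbr bs (v, 0) (w, 0) = hzero" by (simp add: hbr_def hzero_def)

lemma alpha_zel:
  assumes "(j, k) \<in> idx bs"
  shows "alpha bs (fst (zel j k)) = (\<lambda>p. fst (bs!j) * fst (zel j k) p + (if 2 \<le> k then fst (zel j (k-1)) p else 0))"
proof (rule ext)
  fix p :: "nat \<times> nat"
  obtain a b where p: "p = (a, b)" by force
  show "alpha bs (fst (zel j k)) p = fst (bs!j) * fst (zel j k) p + (if 2 \<le> k then fst (zel j (k-1)) p else 0)"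
    using assms unfolding p alpha_def zel_def idx_def by auto
qed

lemma zel1: "(j, 1) \<in> idx bs \<Longrightarrow> (alpha bs (fst (zel j 1)), 0) = hscale (fst (bs!j)) (zel j 1)"
  using alpha_zel[of j 1 bs] by (simp add: hscale_def zel_def)

lemma zelk: "(j, k) \<in> idx bs \<Longrightarrow> 2 \<le> k \<Longrightarrow> (alpha bs (fst (zel j k)), 0) = hadd (hscale (fst (bs!j)) (zel j k)) (zel j (k-1))"
  using alpha_zel[of j k bs] by (simp add: hscale_def zel_def hadd_def)

lemma zel_pair: "zel j k = (fst (zel j k), 0)" by (simp add: zel_def)

lemma zel_Vcar: "(j, k) \<in> idx bs \<Longrightarrow> fst (zel j k) \<in> Vcar bs" using zel_hcar[of j k bs] by (simp add: zel_def)

lemma forward: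
  assumes hom: "hom bs \<phi>" and rep: "rep bs \<phi>" and nr1: "\<not> rep1 bs \<phi>"
  shows "\<exists>\<mu> P t G. \<mu> \<noteq> 0 \<and> invertible P \<and> t \<noteq> 0 \<and> P ** \<phi> uel = msc (\<mu>/2) Hm ** P
     \<and> (\<forall>j<length bs. \<forall>k. 1 \<le> k \<and> k \<le> snd (bs!j) \<longrightarrow> P ** \<phi> (zel j k) = msc (G j k * t) Xp ** P
         \<and> (fst (bs!j) \<noteq> \<mu> \<longrightarrow> G j k = 0) \<and> (k < snd (bs!j) \<longrightarrow> G j k = 0))
     \<and> (\<exists>j<length bs. fst (bs!j) = \<mu> \<and> G j (snd (bs!j)) \<noteq> 0)"
proof -
  have lin: "lin bs \<phi>" using hom hom_lin by auto
  have tr: "x \<in> hcar bs \<Longrightarrow> trace (\<phi> x) = 0" for x using hom by (simp add: hom_def)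
  have br: "x \<in> hcar bs \<Longrightarrow> y \<in> hcar bs \<Longrightarrow> \<phi> (hbr bs x y) = mbr (\<phi> x) (\<phi> y)" for x y
    using rep by (simp add: rep_def)
  define A where "A = \<phi> uel"
  have trA: "trace A = 0" using tr A_def by simp
  have split: "v \<in> Vcar bs \<Longrightarrow> \<phi> (v, c) = \<phi> (v, 0) + msc c A" for v c unfolding A_def by (rule lin_split[OF lin])
  obtain v0 where v0: "v0 \<in> Vcar bs" "\<phi> (v0, 0) \<noteq> 0"
  proof (rule ccontr)
    assume nt: "\<not> thesis"
    have z: "v \<in> Vcar bs \<Longrightarrow> \<phi> (v,0) = 0" for v using that nt by blast
    have "\<forall>x\<in>hcar bs. \<exists>c. \<phi> x = msc c A"
    proof
      fix x assume "x \<in> hcar bs"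
      then obtain v c where x: "x = (v, c)" "v \<in> Vcar bs" by (auto simp: hcar_def)
      have "\<phi> x = msc c A" using x z[OF x(2)] split[OF x(2), of c] by simp
      then show "\<exists>c. \<phi> x = msc c A" by blast
    qed
    then have "rep1 bs \<phi>" unfolding rep1_def using rep by blast
    then show False using nr1 by simp
  qed
  define M where "M = \<phi> (v0, 0)"
  have M0: "M \<noteq> 0" and trM: "trace M = 0" using v0 tr M_def by auto
  have mult: "\<exists>c. \<phi> (v,0) = msc c M" if "v \<in> Vcar bs" for v
  proof (rule commute_mult[OF trM])
    show "trace (\<phi> (v, 0)) = 0" using tr that by simp
    show "M \<noteq> 0" by (fact M0)
    show "mbr (\<phi> (v, 0)) M = 0" using br[of "(v,0)" "(v0,0)"] hbr_VV lin_zero[OF lin] v0 that M_def by simp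
  qed
  define g where "g v = (SOME c. \<phi> (v,0) = msc c M)" for v
  have gM: "\<phi> (v,0) = msc (g v) M" if "v \<in> Vcar bs" for v
    unfolding g_def using someI_ex[OF mult[OF that]] .
  have brA: "\<phi> (alpha bs v, 0) = mbr A (\<phi> (v,0))" if "v \<in> Vcar bs" for v
    using br[of uel "(v,0)"] hbr_uel A_def that by simp
  define \<mu> where "\<mu> = g (alpha bs v0)"
  have mu: "mbr A M = msc \<mu> M"
    using brA[OF v0(1)] gM[OF alpha_Vcar] M_def \<mu>_def by simp
  have mu0: "\<mu> \<noteq> 0"
  proof
    assume "\<mu> = 0"
    then have "mbr A M = 0" using mu by simp
    then obtain c where c: "A = msc c M" using commute_mult[OF trM trA M0] by blast
    have "\<forall>x\<in>hcar bs. \<exists>c. \<phi> x = msc c M"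
    proof
      fix x assume "x \<in> hcar bs"
      then obtain v d where x: "x = (v, d)" "v \<in> Vcar bs" by (auto simp: hcar_def)
      have "\<phi> x = msc (g v + d * c) M" using x split[OF x(2), of d] gM[OF x(2)] c by (simp add: msc_msc msc_plus)
      then show "\<exists>c. \<phi> x = msc c M" by blast
    qed
    then have "rep1 bs \<phi>" unfolding rep1_def using rep by blast
    then show False using nr1 by simp
  qed
  obtain P t where P: "invertible P" "t \<noteq> 0" "P ** A = msc (\<mu>/2) Hm ** P" "P ** M = msc t Xp ** P"
    using normal_form[OF trA trM M0 mu mu0] by blast
  have galpha: "g (alpha bs v) = \<mu> * g v" if "v \<in> Vcar bs" for v
  proof -
    have "msc (g (alpha bs v)) M = msc (g v * \<mu>) M"
      using gM[OF alpha_Vcar] brA[OF that] gM[OF that] mu by (simp add: mbr_msc msc_msc)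
    then show ?thesis using msc_inj M0 by (simp add: mult.commute)
  qed
  define G where "G j k = g (fst (zel j k))" for j k
  have phiz: "\<phi> (zel j k) = msc (G j k) M" if "(j,k) \<in> idx bs" for j k
    using gM[OF zel_Vcar[OF that]] G_def zel_pair[of j k] by metis
  have rel1: "\<mu> * G j 1 = fst (bs!j) * G j 1" if "(j,1) \<in> idx bs" for j
  proof -
    have "msc (\<mu> * G j 1) M = msc (fst (bs!j) * G j 1) M"
      using gM[OF alpha_Vcar, of "fst (zel j 1)"] galpha[OF zel_Vcar[OF that]] zel1[OF that]
        lin_scale[OF lin zel_hcar[OF that]] phiz[OF that] G_def by (simp add: msc_msc)
    then show ?thesis using msc_inj M0 by blast
  qed
  have relk: "\<mu> * G j k = fst (bs!j) * G j k + G j (k-1)" if "(j,k) \<in> idx bs" "2 \<le> k" for j k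
  proof -
    have k1: "(j,k-1) \<in> idx bs" using that by (auto simp: idx_def)
    have "\<phi> (alpha bs (fst (zel j k)), 0) = msc (fst (bs!j)) (\<phi> (zel j k)) + \<phi> (zel j (k-1))"
      unfolding zelk[OF that]
      using lin_add[OF lin hscale_hcar[OF zel_hcar[OF that(1)]] zel_hcar[OF k1]] lin_scale[OF lin zel_hcar[OF that(1)]] by simp
    then have "msc (\<mu> * G j k) M = msc (fst (bs!j) * G j k + G j (k-1)) M"
      using gM[OF alpha_Vcar, of "fst (zel j k)"] galpha[OF zel_Vcar[OF that(1)]]
        phiz[OF that(1)] phiz[OF k1] G_def by (simp add: msc_msc msc_plus)
    then show ?thesis using msc_inj M0 by blast
  qed
  have zero_other: "1 \<le> k \<longrightarrow> k \<le> snd (bs!j) \<longrightarrow> G j k = 0" if "j < length bs" "fst (bs!j) \<noteq> \<mu>" for j k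
  proof (induction k)
    case 0 then show ?case by simp
  next
    case (Suc k)
    show ?case
    proof (intro impI)
      assume a: "1 \<le> Suc k" "Suc k \<le> snd (bs!j)"
      have i: "(j, Suc k) \<in> idx bs" using a that by (simp add: idx_def)
      show "G j (Suc k) = 0"
      proof (cases "k = 0")
        case True
        then show ?thesis using rel1[of j] i that(2) by (auto simp: algebra_simps)
      next
        case False
        then have "G j k = 0" using Suc a by simp
        then have "(\<mu> - fst (bs!j)) * G j (Suc k) = 0" using relk[OF i] False by (simp add: algebra_simps)
        then show ?thesis using that(2) by simp
      qed
    qed
  qed
  have zero_low: "G j k = 0" if "j < length bs" "fst (bs!j) = \<mu>" "1 \<le> k" "k < snd (bs!j)" for j k
    using relk[of j "Suc k"] that by (simp add: idx_def)
  have "msc 1 M = msc (g v0) M" using gM[OF v0(1), folded M_def] by simp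
  then have gv0: "g v0 = 1" using msc_inj M0 by metis
  have "msc 1 M = msc (\<Sum>p\<in>idx bs. v0 p * G (fst p) (snd p)) M"
  proof -
    have "msc 1 M = (\<Sum>p\<in>idx bs. msc (v0 p) (\<phi> (zel (fst p) (snd p))))"
      using decomp[OF lin v0(1), folded M_def] by simp
    also have "\<dots> = (\<Sum>p\<in>idx bs. msc (v0 p * G (fst p) (snd p)) M)"
    proof (rule sum.cong)
      fix x assume "x \<in> idx bs"
      then show "msc (v0 x) (\<phi> (zel (fst x) (snd x))) = msc (v0 x * G (fst x) (snd x)) M"
        using phiz[of "fst x" "snd x"] by (simp add: msc_msc)
    qed simp
    also have "\<dots> = msc (\<Sum>p\<in>idx bs. v0 p * G (fst p) (snd p)) M" by (simp add: msc_sum finite_idx)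
    finally show ?thesis .
  qed
  then have "1 = (\<Sum>p\<in>idx bs. v0 p * G (fst p) (snd p))" by (rule msc_inj[OF _ M0])
  then have "(\<Sum>p\<in>idx bs. v0 p * G (fst p) (snd p)) \<noteq> 0" by simp
  then have "\<exists>p\<in>idx bs. v0 p * G (fst p) (snd p) \<noteq> 0" by (rule sum.not_neutral_contains_not_neutral) blast
  then obtain p where p: "p \<in> idx bs" "G (fst p) (snd p) \<noteq> 0" by auto
  obtain j k where jk: "p = (j,k)" "j < length bs" "1 \<le> k" "k \<le> snd (bs!j)" using p(1) by (auto simp: idx_def)
  have lj: "fst (bs!j) = \<mu>" using zero_other[of j k] jk p by auto
  have kr: "k = snd (bs!j)" using zero_low[of j k] jk p lj by force
  show ?thesis
    apply (rule exI[of _ \<mu>], rule exI[of _ P], rule exI[of _ t], rule exI[of _ G])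
  proof (intro conjI)
    show "\<mu> \<noteq> 0" "invertible P" "t \<noteq> 0" using mu0 P by auto
    show "P ** \<phi> uel = msc (\<mu>/2) Hm ** P" using P(3) A_def by simp
    show "\<exists>j<length bs. fst (bs!j) = \<mu> \<and> G j (snd (bs!j)) \<noteq> 0" using jk lj kr p by auto
    show "\<forall>j<length bs. \<forall>k. 1 \<le> k \<and> k \<le> snd (bs!j) \<longrightarrow> P ** \<phi> (zel j k) = msc (G j k * t) Xp ** P
         \<and> (fst (bs!j) \<noteq> \<mu> \<longrightarrow> G j k = 0) \<and> (k < snd (bs!j) \<longrightarrow> G j k = 0)"
    proof (intro allI impI conjI)
      fix j k assume a: "j < length bs" "1 \<le> k \<and> k \<le> snd (bs!j)"
      then have i: "(j,k) \<in> idx bs" by (simp add: idx_def)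
      show "P ** \<phi> (zel j k) = msc (G j k * t) Xp ** P"
        using phiz[OF i] P(4) by (simp add: mm_msc_l mm_msc_r msc_msc)
      show "G j k = 0" if "fst (bs!j) \<noteq> \<mu>" using zero_other[OF a(1) that] a by simp
      show "G j k = 0" if "k < snd (bs!j)"
      proof (cases "fst (bs!j) = \<mu>")
        case True then show ?thesis using zero_low a that by simp
      next
        case False then show ?thesis using zero_other[OF a(1) False] a by simp
      qed
    qed
  qed
qed

lemma mbr_UX:
  assumes "e \<in> {1, -1::int}"
  shows "mbr (msc a (Xe e) + msc c (msc (l/(2 * of_int e)) Hm)) (msc b (Xe e) + msc d (msc (l/(2 * of_int e)) Hm))
         = msc (l*(c*b - d*a)) (Xe e)"
  using assms by (subst mat2_eq) (auto simp: Xe_def mbr_nth mmul_nth Hm_nth Xp_nth Xm_nth field_simps)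

lemma not_line:
  assumes "msc c1 N = msc k Hm" "k \<noteq> 0" "msc c2 N = msc s (Xe e)" "s \<noteq> 0"
  shows False
proof -
  have "c1 * N$1$2 = 0" "c1 * N$2$1 = 0" "c1 * N$1$1 = k"
    using assms(1) by (simp_all add: mat2_eq Hm_nth)
  then have "N$1$2 = 0" "N$2$1 = 0" using assms(2) by auto
  then show False using assms(3,4) by (cases "e = 1") (auto simp: mat2_eq Xe_def Xp_nth Xm_nth)
qed

lemma lin_conj:
  assumes "lin bs \<phi>"
  shows "lin bs (\<lambda>x. P ** \<phi> x ** Q)"
  using assms unfolding lin_def by (simp add: matrix_add_ldistrib mm_add_r mm_msc_l mm_msc_r)

lemma backward:
  assumes bs1: "\<forall>b \<in> set bs. 1 \<le> snd b" and hom: "hom bs \<phi>" and e: "e \<in> {1, -1::int}" and l0: "l \<noteq> 0" and P: "invertible P"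
   and psidef: "\<psi> = (\<lambda>x. P ** \<phi> x ** matrix_inv P)"
   and u: "\<psi> uel = msc (l / (2 * of_int e)) Hm"
   and oth: "\<forall>j<length bs. fst (bs!j) \<noteq> l \<longrightarrow> (\<forall>k. 1 \<le> k \<and> k \<le> snd (bs!j) \<longrightarrow> \<psi> (zel j k) = 0)"
   and same: "\<forall>j<length bs. fst (bs!j) = l \<longrightarrow> (\<exists>t::nat\<Rightarrow>complex. (\<forall>k. 1 \<le> k \<and> k \<le> snd (bs!j) \<longrightarrow>
                            \<psi> (zel j k) = msc (t k) (Xe e)) \<and> (\<forall>k. 1 \<le> k \<and> k < snd (bs!j) \<longrightarrow> t k = 0))"
   and ex: "\<exists>j<length bs. fst (bs!j) = l \<and> \<psi> (zel j (snd (bs!j))) \<noteq> 0"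
  shows "rep bs \<phi> \<and> \<not> rep1 bs \<phi>"
proof -
  define X where "X = Xe e"
  define U where "U = msc (l / (2 * of_int e)) Hm"
  have lin: "lin bs \<phi>" using hom hom_lin by auto
  have linp: "lin bs \<psi>" unfolding psidef by (rule lin_conj[OF lin])
  have "\<forall>j. \<exists>t. (j < length bs \<and> fst (bs!j) = l) \<longrightarrow> ((\<forall>k. 1 \<le> k \<and> k \<le> snd (bs!j) \<longrightarrow>
                            \<psi> (zel j k) = msc (t k) X) \<and> (\<forall>k. 1 \<le> k \<and> k < snd (bs!j) \<longrightarrow> t k = 0))"
    using same X_def by auto
  then obtain T where T: "\<And>j. j < length bs \<Longrightarrow> fst (bs!j) = l \<Longrightarrow> (\<forall>k. 1 \<le> k \<and> k \<le> snd (bs!j) \<longrightarrow>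
                            \<psi> (zel j k) = msc (T j k) X) \<and> (\<forall>k. 1 \<le> k \<and> k < snd (bs!j) \<longrightarrow> T j k = 0)"
    by metis
  define s where "s p = (if fst (bs!(fst p)) = l \<and> snd p = snd (bs!(fst p)) then T (fst p) (snd p) else 0)" for p
  have zs: "\<psi> (zel j k) = msc (s (j,k)) X" if "(j,k) \<in> idx bs" for j k
  proof -
    have jk: "j < length bs" "1 \<le> k" "k \<le> snd (bs!j)" using that by (auto simp: idx_def)
    show ?thesis
    proof (cases "fst (bs!j) = l")
      case False then show ?thesis using oth jk s_def by auto
    next
      case True
      show ?thesis
      proof (cases "k = snd (bs!j)")
        case True2: True
        then show ?thesis using T[OF jk(1) True] jk s_def True by auto
      next
        case False
        then show ?thesis using T[OF jk(1) True] jk s_def True by auto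
      qed
    qed
  qed
  define L where "L v = (\<Sum>p\<in>idx bs. v p * s p)" for v
  have psiV: "\<psi> (v, 0) = msc (L v) X" if "v \<in> Vcar bs" for v
  proof -
    have "\<psi> (v, 0) = (\<Sum>p\<in>idx bs. msc (v p) (\<psi> (zel (fst p) (snd p))))" by (rule decomp[OF linp that])
    also have "\<dots> = (\<Sum>p\<in>idx bs. msc (v p * s p) X)"
    proof (rule sum.cong)
      fix x assume "x \<in> idx bs"
      then show "msc (v x) (\<psi> (zel (fst x) (snd x))) = msc (v x * s x) X"
        using zs[of "fst x" "snd x"] by (simp add: msc_msc)
    qed simp
    also have "\<dots> = msc (L v) X" by (simp add: msc_sum finite_idx L_def)
    finally show ?thesis .
  qed
  have Lalpha: "L (alpha bs v) = l * L v" if "v \<in> Vcar bs" for v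
    unfolding L_def sum_distrib_left
  proof (rule sum.cong)
    fix p assume p: "p \<in> idx bs"
    obtain j k where jk: "p = (j,k)" by force
    show "alpha bs v p * s p = l * (v p * s p)"
    proof (cases "s p = 0")
      case True then show ?thesis by simp
    next
      case False
      then have "fst (bs!j) = l \<and> k = snd (bs!j)" unfolding s_def jk by (auto split: if_splits)
      then have c: "fst (bs!j) = l" "k = snd (bs!j)" by auto
      have "(j, Suc k) \<notin> idx bs" using c by (simp add: idx_def)
      then have "v (j, Suc k) = 0" using that by (simp add: Vcar_def)
      then have "alpha bs v p = l * v p" using p jk c by (simp add: alpha_def)
      then show ?thesis by simp
    qed
  qed simp
  have Llin: "L (\<lambda>p. a * v p - b * w p) = a * L v - b * L w" for a b v w
    unfolding L_def by (simp add: algebra_simps sum_subtractf sum_distrib_left)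
  have psplit: "\<psi> (v, c) = msc (L v) X + msc c U" if "v \<in> Vcar bs" for v c
    using lin_split[OF linp that, of c] psiV[OF that] u U_def by simp
  have repp: "\<psi> (hbr bs x y) = mbr (\<psi> x) (\<psi> y)" if hx: "x \<in> hcar bs" and hy: "y \<in> hcar bs" for x y
  proof -
    obtain v c where x: "x = (v,c)" "v \<in> Vcar bs" using hx by (cases x) auto
    obtain w d where y: "y = (w,d)" "w \<in> Vcar bs" using hy by (cases y) auto
    have vw: "(\<lambda>p. c * w p - d * v p) \<in> Vcar bs" using x y by (simp add: Vcar_def)
    have asub: "alpha bs (\<lambda>p. c * w p - d * v p) = (\<lambda>p. c * alpha bs w p - d * alpha bs v p)"
      unfolding alpha_def by (simp add: fun_eq_iff split_beta algebra_simps)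
    have "hbr bs x y = (alpha bs (\<lambda>p. c * w p - d * v p), 0)"
      using x y asub by (simp add: hbr_def)
    then have "\<psi> (hbr bs x y) = msc (l * (c * L w - d * L v)) X"
    proof -
      have "L (alpha bs (\<lambda>p. c * w p - d * v p)) = l * (c * L w - d * L v)"
        using Lalpha[OF vw] Llin[of c w d v] by simp
      then show ?thesis using \<open>hbr bs x y = _\<close> psiV[OF alpha_Vcar] by simp
    qed
    also have "\<dots> = mbr (\<psi> x) (\<psi> y)"
      using psplit[OF x(2)] psplit[OF y(2)] x(1) y(1) mbr_UX[OF e, of "L v" c l "L w" d] X_def U_def
      by (simp add: algebra_simps)
    finally show ?thesis .
  qed
  define Q where "Q = matrix_inv P"
  have PQ: "P ** Q = mat 1" "Q ** P = mat 1" unfolding Q_def by (rule minv[OF P])+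
  have phiq: "\<phi> x = Q ** \<psi> x ** P" for x
  proof -
    have "Q ** \<psi> x ** P = Q ** (P ** \<phi> x ** Q) ** P" unfolding psidef Q_def by simp
    also have "\<dots> = (Q ** P) ** \<phi> x ** (Q ** P)" by (simp only: matrix_mul_assoc)
    also have "\<dots> = \<phi> x" unfolding PQ by simp
    finally show ?thesis by simp
  qed
  have rep: "rep bs \<phi>"
    unfolding rep_def
  proof (intro conjI ballI)
    show "hom bs \<phi>" by (fact hom)
    fix x y assume hxy: "x \<in> hcar bs" "y \<in> hcar bs"
    have "\<phi> (hbr bs x y) = Q ** \<psi> (hbr bs x y) ** P" by (rule phiq)
    also have "\<dots> = Q ** mbr (\<psi> x) (\<psi> y) ** P" using repp[OF hxy] by simp
    also have "\<dots> = mbr (Q ** \<psi> x ** P) (Q ** \<psi> y ** P)" by (rule conj_mbr[OF PQ(1), symmetric])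
    also have "\<dots> = mbr (\<phi> x) (\<phi> y)" using phiq[of x] phiq[of y] by simp
    finally show "\<phi> (hbr bs x y) = mbr (\<phi> x) (\<phi> y)" .
  qed
  have nr1: "\<not> rep1 bs \<phi>"
  proof
    assume "rep1 bs \<phi>"
    then obtain M0 where M0: "\<forall>x\<in>hcar bs. \<exists>c. \<phi> x = msc c M0" unfolding rep1_def by blast
    define N where "N = P ** M0 ** Q"
    have psiN: "\<exists>c. \<psi> x = msc c N" if hx: "x \<in> hcar bs" for x
    proof -
      obtain c where c: "\<phi> x = msc c M0" using M0 hx by blast
      have "\<psi> x = P ** \<phi> x ** Q" unfolding psidef Q_def by simp
      also have "\<dots> = msc c N" unfolding c N_def by (simp only: mm_msc_l mm_msc_r)
      finally show ?thesis by blast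
    qed
    obtain c1 where "\<psi> uel = msc c1 N" using psiN[OF uel_hcar] by blast
    then have c1: "msc c1 N = msc (l / (2 * of_int e)) Hm" using u by simp
    obtain j where j: "j < length bs" "fst (bs!j) = l" "\<psi> (zel j (snd (bs!j))) \<noteq> 0" using ex by blast
    have r1: "1 \<le> snd (bs!j)" using bs1 j(1) by simp
    have i: "(j, snd (bs!j)) \<in> idx bs" using j r1 by (simp add: idx_def)
    obtain c2 where "\<psi> (zel j (snd (bs!j))) = msc c2 N" using psiN[OF zel_hcar[OF i]] by blast
    then have c2: "msc c2 N = msc (s (j, snd (bs!j))) (Xe e)" using zs[OF i] X_def by simp
    have s0: "s (j, snd (bs!j)) \<noteq> 0"
    proof
      assume "s (j, snd (bs!j)) = 0"
      then have "\<psi> (zel j (snd (bs!j))) = 0" using zs[OF i] by simp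
      then show False using j(3) by contradiction
    qed
    have k0: "l / (2 * of_int e) \<noteq> 0" using l0 e by auto
    show False by (rule not_line[OF c1 k0 c2 s0])
  qed
  show ?thesis using rep nr1 by blast
qed

lemma alpha_scale: "alpha bs (\<lambda>p. a * v p) = (\<lambda>p. a * alpha bs v p)"
  unfolding alpha_def by (simp add: fun_eq_iff split_beta algebra_simps)

lemma alpha_sub2: "alpha bs (\<lambda>p. a * v p - b * w p) = (\<lambda>p. a * alpha bs v p - b * alpha bs w p)"
  unfolding alpha_def by (simp add: fun_eq_iff split_beta algebra_simps)

lemma alpha_z1: "(j, 1) \<in> idx bs \<Longrightarrow> alpha bs (fst (zel j 1)) = (\<lambda>p. fst (bs!j) * fst (zel j 1) p)"
  using alpha_zel[of j 1 bs] by simp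

lemma eig_block:
  assumes "j < length bs" "1 \<le> snd (bs!j)"
  shows "is_eigenvalue bs (fst (bs!j))"
proof -
  have i: "(j,1) \<in> idx bs" using assms by (simp add: idx_def)
  have "fst (zel j 1) \<noteq> (\<lambda>p. 0)"
  proof
    assume "fst (zel j 1) = (\<lambda>p. 0)"
    then have "fst (zel j 1) (j,1) = 0" by simp
    then show False by (simp add: zel_def)
  qed
  then show ?thesis unfolding is_eigenvalue_def using zel_Vcar[OF i] alpha_z1[OF i] by blast
qed

lemma eig_in:
  assumes "is_eigenvalue bs l"
  shows "\<exists>j<length bs. fst (bs!j) = l"
proof -
  obtain v where v: "v \<in> Vcar bs" "v \<noteq> (\<lambda>p. 0)" "alpha bs v = (\<lambda>p. l * v p)"
    using assms by (auto simp: is_eigenvalue_def)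
  have "\<exists>p. v p \<noteq> 0"
  proof (rule ccontr)
    assume "\<not> (\<exists>p. v p \<noteq> 0)"
    then have "v = (\<lambda>p. 0)" by (simp add: fun_eq_iff)
    then show False using v(2) by simp
  qed
  then obtain p where p: "v p \<noteq> 0" by blast
  obtain j k0 where jk: "p = (j, k0)" by force
  have pi: "(j, k0) \<in> idx bs" using v(1) p jk by (auto simp: Vcar_def)
  define S where "S = {k. v (j,k) \<noteq> 0}"
  have Sfin: "finite S"
  proof (rule finite_subset)
    show "S \<subseteq> {..snd (bs!j)}"
    proof
      fix k assume "k \<in> S"
      then have "(j,k) \<in> idx bs" using v(1) by (auto simp: S_def Vcar_def)
      then show "k \<in> {..snd (bs!j)}" by (simp add: idx_def)
    qed
  qed simp
  have k0S: "k0 \<in> S" using p jk S_def by simp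
  define K where "K = Max S"
  have KS: "K \<in> S" unfolding K_def using Sfin k0S by (intro Max_in) auto
  have SK: "Suc K \<notin> S"
  proof
    assume "Suc K \<in> S"
    then have "Suc K \<le> K" unfolding K_def using Sfin by (rule Max_ge[rotated])
    then show False by simp
  qed
  have vS: "v (j, Suc K) = 0" using SK S_def by simp
  have Ki: "(j,K) \<in> idx bs" using KS v(1) by (auto simp: S_def Vcar_def)
  have "alpha bs v (j,K) = fst (bs!j) * v (j,K)" using Ki vS by (simp add: alpha_def)
  moreover have "alpha bs v (j,K) = l * v (j,K)" using v(3) by simp
  ultimately have "fst (bs!j) = l" using KS S_def by simp
  moreover have "j < length bs" using pi by (simp add: idx_def)
  ultimately show ?thesis by blast
qed

lemma eig_finite: "finite {l. is_eigenvalue bs l \<and> l \<noteq> 0}"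
proof (rule finite_subset)
  show "{l. is_eigenvalue bs l \<and> l \<noteq> 0} \<subseteq> fst ` set bs"
    using eig_in by fastforce
qed simp

lemma brk_rep: "brk_iter bs (replicate n uel) (zel j 1) = (\<lambda>p. fst (bs!j) ^ n * fst (zel j 1) p, 0)"
  if "(j,1) \<in> idx bs" for n
proof (induction n)
  case 0 then show ?case by (simp add: zel_def)
next
  case (Suc n)
  have "brk_iter bs (replicate (Suc n) uel) (zel j 1) = hbr bs uel (\<lambda>p. fst (bs!j) ^ n * fst (zel j 1) p, 0)"
    using Suc by simp
  also have "\<dots> = (alpha bs (\<lambda>p. fst (bs!j) ^ n * fst (zel j 1) p), 0)" by (rule hbr_uel)
  also have "\<dots> = (\<lambda>p. fst (bs!j) ^ Suc n * fst (zel j 1) p, 0)"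
    using alpha_z1[OF that] by (simp add: alpha_scale ac_simps)
  finally show ?case .
qed

lemma notnil:
  assumes "j < length bs" "1 \<le> snd (bs!j)" "fst (bs!j) \<noteq> 0"
  shows "\<not> h_nilpotent bs"
proof
  assume "h_nilpotent bs"
  then obtain n where n: "\<And>xs x. length xs = n \<and> set xs \<subseteq> hcar bs \<and> x \<in> hcar bs \<Longrightarrow> brk_iter bs xs x = hzero"
    unfolding h_nilpotent_def by blast
  have i: "(j,1) \<in> idx bs" using assms by (simp add: idx_def)
  have "brk_iter bs (replicate n uel) (zel j 1) = hzero"
  proof -
    have "set (replicate n uel) \<subseteq> hcar bs" by (induction n) auto
    then show ?thesis using n[of "replicate n uel" "zel j 1"] zel_hcar[OF i] by simp
  qed
  then have "fst (bs!j) ^ n * fst (zel j 1) (j,1) = 0"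
    unfolding brk_rep[OF i] hzero_def by (metis fst_conv)
  then show False using assms(3) by (simp add: zel_def)
qed

lemma alpha_pow:
  assumes z: "\<forall>j<length bs. fst (bs!j) = 0" and v: "v \<in> Vcar bs"
  shows "(alpha bs ^^ n) v (a,b) = (if (a,b) \<in> idx bs then v (a, b + n) else 0)"
proof (induction n arbitrary: a b)
  case 0
  then show ?case using v by (auto simp: Vcar_def)
next
  case (Suc n)
  show ?case
  proof (cases "(a,b) \<in> idx bs")
    case True
    then have a: "a < length bs" by (simp add: idx_def)
    have "(alpha bs ^^ Suc n) v (a,b) = (alpha bs ^^ n) v (a, Suc b)"
      using True z a by (simp add: alpha_def)
    also have "\<dots> = v (a, b + Suc n)"
    proof (cases "(a, Suc b) \<in> idx bs")
      case True then show ?thesis using Suc by simp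
    next
      case False
      then have "(a, b + Suc n) \<notin> idx bs" by (auto simp: idx_def)
      then show ?thesis using Suc False v by (simp add: Vcar_def)
    qed
    finally show ?thesis using True by simp
  next
    case False then show ?thesis by (simp add: alpha_def)
  qed
qed

lemma alpha_pow_scale: "(alpha bs ^^ n) (\<lambda>p. c * w p) = (\<lambda>p. c * (alpha bs ^^ n) w p)"
  by (induction n) (simp_all add: alpha_scale)

lemma funpow_Vcar: "(alpha bs ^^ n) w \<in> Vcar bs" if "w \<in> Vcar bs"
  using that by (cases n) (simp_all add: alpha_Vcar del: funpow.simps, simp add: alpha_Vcar)

lemma brk_shape:
  assumes "set ys \<subseteq> hcar bs" "x \<in> hcar bs"
  shows "\<exists>w\<in>Vcar bs. fst (brk_iter bs ys x) = (alpha bs ^^ length ys) w \<and> (ys \<noteq> [] \<longrightarrow> snd (brk_iter bs ys x) = 0)"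
  using assms(1)
proof (induction ys)
  case Nil
  then show ?case using assms(2) by (cases x) auto
next
  case (Cons y ys)
  obtain w where w: "w \<in> Vcar bs" "fst (brk_iter bs ys x) = (alpha bs ^^ length ys) w"
      "ys \<noteq> [] \<longrightarrow> snd (brk_iter bs ys x) = 0" using Cons by auto
  obtain v' c' where y: "y = (v', c')" "v' \<in> Vcar bs" using Cons.prems by (cases y) auto
  define B where "B = brk_iter bs ys x"
  have e: "brk_iter bs (y # ys) x = (\<lambda>p. c' * alpha bs (fst B) p - snd B * alpha bs v' p, 0)"
    using y B_def by (simp add: hbr_def)
  show ?case
  proof (cases "ys = []")
    case True
    have "fst B = w" using w True B_def by simp
    then have "fst (brk_iter bs (y # ys) x) = (alpha bs ^^ length (y # ys)) (\<lambda>p. c' * w p - snd B * v' p)"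
      using e True by (simp add: alpha_sub2)
    moreover have "(\<lambda>p. c' * w p - snd B * v' p) \<in> Vcar bs" using w(1) y(2) by (simp add: Vcar_def)
    ultimately show ?thesis using e by auto
  next
    case False
    then have "snd B = 0" using w B_def by simp
    then have "fst (brk_iter bs (y # ys) x) = (alpha bs ^^ length (y # ys)) (\<lambda>p. c' * w p)"
      using e w(2) B_def by (simp add: alpha_pow_scale alpha_scale)
    moreover have "(\<lambda>p. c' * w p) \<in> Vcar bs" using w(1) by (simp add: Vcar_def)
    ultimately show ?thesis using e by auto
  qed
qed

lemma nil_of:
  assumes z: "\<forall>j<length bs. fst (bs!j) = 0"
  shows "h_nilpotent bs"
  unfolding h_nilpotent_def
proof (intro exI allI impI)
  define n where "n = Suc (sum_list (map snd bs))"
  fix xs x assume a: "length xs = n \<and> set xs \<subseteq> hcar bs \<and> x \<in> hcar bs"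
  obtain w where w: "w \<in> Vcar bs" "fst (brk_iter bs xs x) = (alpha bs ^^ n) w"
      "xs \<noteq> [] \<longrightarrow> snd (brk_iter bs xs x) = 0" using brk_shape[of xs bs x] a by auto
  have ne: "xs \<noteq> []" using a n_def by auto
  have "(alpha bs ^^ n) w = (\<lambda>p. 0)"
  proof
    fix p :: "nat \<times> nat"
    obtain a b where p: "p = (a,b)" by force
    show "(alpha bs ^^ n) w p = 0"
    proof (cases "(a,b) \<in> idx bs")
      case True
      then have "a < length bs" "b \<ge> 1" by (auto simp: idx_def)
      then have "snd (bs!a) \<le> sum_list (map snd bs)" by (intro member_le_sum_list) auto
      then have "(a, b + n) \<notin> idx bs" using n_def by (auto simp: idx_def)
      then show ?thesis using alpha_pow[OF z w(1)] p w(1) by (simp add: Vcar_def)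
    next
      case False then show ?thesis using alpha_pow[OF z w(1)] p by simp
    qed
  qed
  then show "brk_iter bs xs x = hzero" using w ne by (simp add: hzero_def prod_eq_iff)
qed

lemma mm_zero_l: "(0::mat2) ** (P::mat2) = 0" by (subst mat2_eq) (simp add: mmul_nth)

lemma minv_1: "matrix_inv (mat 1 :: mat2) = mat 1"
proof -
  have "invertible (mat 1 :: mat2)" unfolding invertible_def by (rule exI[of _ "mat 1"]) simp
  from minv(1)[OF this] show ?thesis by simp
qed

lemma RHS_of_forward:
  assumes bs1: "\<forall>b \<in> set bs. 1 \<le> snd b" and hom: "hom bs \<phi>" and rep: "rep bs \<phi>" and nr1: "\<not> rep1 bs \<phi>"
  shows "\<exists>l e P. is_eigenvalue bs l \<and> l \<noteq> 0 \<and> e \<in> {1, -1} \<and> invertible P \<and>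
                   (let \<psi> = (\<lambda>x. P ** \<phi> x ** matrix_inv P) in
                     \<psi> uel = msc (l / (2 * of_int e)) Hm
                   \<and> (\<forall>j < length bs. fst (bs ! j) \<noteq> l \<longrightarrow>
                        (\<forall>k. 1 \<le> k \<and> k \<le> snd (bs ! j) \<longrightarrow> \<psi> (zel j k) = 0))
                   \<and> (\<forall>j < length bs. fst (bs ! j) = l \<longrightarrow>
                        (\<exists>t :: nat \<Rightarrow> complex. (\<forall>k. 1 \<le> k \<and> k \<le> snd (bs ! j) \<longrightarrow>
                            \<psi> (zel j k) = msc (t k) (Xe e)) \<and>
                          (\<forall>k. 1 \<le> k \<and> k < snd (bs ! j) \<longrightarrow> t k = 0)))
                   \<and> (\<exists>j < length bs. fst (bs ! j) = l \<and> \<psi> (zel j (snd (bs ! j))) \<noteq> 0))"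
proof -
  obtain \<mu> P t G where F: "\<mu> \<noteq> 0" "invertible P" "t \<noteq> 0" "P ** \<phi> uel = msc (\<mu>/2) Hm ** P"
     "\<forall>j<length bs. \<forall>k. 1 \<le> k \<and> k \<le> snd (bs!j) \<longrightarrow> P ** \<phi> (zel j k) = msc (G j k * t) Xp ** P
         \<and> (fst (bs!j) \<noteq> \<mu> \<longrightarrow> G j k = 0) \<and> (k < snd (bs!j) \<longrightarrow> G j k = 0)"
     "\<exists>j<length bs. fst (bs!j) = \<mu> \<and> G j (snd (bs!j)) \<noteq> 0"
    using forward[OF hom rep nr1] by blast
  obtain j0 where j0: "j0 < length bs" "fst (bs!j0) = \<mu>" "G j0 (snd (bs!j0)) \<noteq> 0" using F(6) by blast
  have r0: "1 \<le> snd (bs!j0)" using bs1 j0(1) by simp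
  have eig: "is_eigenvalue bs \<mu>" using eig_block[OF j0(1) r0] j0(2) by simp
  note cj = conj_iff[OF F(2)]
  have Xe1: "Xe 1 = Xp" by (simp add: Xe_def)
  show ?thesis
    apply (rule exI[of _ \<mu>], rule exI[of _ "1::int"], rule exI[of _ P])
    unfolding Let_def
  proof (intro conjI)
    show "is_eigenvalue bs \<mu>" "\<mu> \<noteq> 0" "(1::int) \<in> {1, -1}" "invertible P" using eig F by auto
    show "P ** \<phi> uel ** matrix_inv P = msc (\<mu> / (2 * of_int (1::int))) Hm" unfolding cj using F(4) by simp
    show "\<forall>j<length bs. fst (bs ! j) \<noteq> \<mu> \<longrightarrow> (\<forall>k. 1 \<le> k \<and> k \<le> snd (bs ! j) \<longrightarrow> P ** \<phi> (zel j k) ** matrix_inv P = 0)"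
    proof (intro allI impI)
      fix j k assume a: "j < length bs" "fst (bs ! j) \<noteq> \<mu>" "1 \<le> k \<and> k \<le> snd (bs ! j)"
      have "P ** \<phi> (zel j k) = msc (G j k * t) Xp ** P" "G j k = 0" using F(5) a by auto
      then show "P ** \<phi> (zel j k) ** matrix_inv P = 0" unfolding cj by (simp add: mm_zero_l)
    qed
    show "\<forall>j<length bs. fst (bs ! j) = \<mu> \<longrightarrow> (\<exists>ta. (\<forall>k. 1 \<le> k \<and> k \<le> snd (bs ! j) \<longrightarrow> P ** \<phi> (zel j k) ** matrix_inv P = msc (ta k) (Xe 1)) \<and>
              (\<forall>k. 1 \<le> k \<and> k < snd (bs ! j) \<longrightarrow> ta k = 0))"
    proof (intro allI impI)
      fix j assume a: "j < length bs" "fst (bs ! j) = \<mu>"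
      show "\<exists>ta. (\<forall>k. 1 \<le> k \<and> k \<le> snd (bs ! j) \<longrightarrow> P ** \<phi> (zel j k) ** matrix_inv P = msc (ta k) (Xe 1)) \<and>
              (\<forall>k. 1 \<le> k \<and> k < snd (bs ! j) \<longrightarrow> ta k = 0)"
      proof (rule exI[of _ "\<lambda>k. G j k * t"], intro conjI allI impI)
        fix k assume k: "1 \<le> k \<and> k \<le> snd (bs ! j)"
        show "P ** \<phi> (zel j k) ** matrix_inv P = msc (G j k * t) (Xe 1)" unfolding cj Xe1 using F(5) a k by blast
      next
        fix k assume k: "1 \<le> k \<and> k < snd (bs ! j)"
        then show "G j k * t = 0" using F(5) a by auto
      qed
    qed
    show "\<exists>j<length bs. fst (bs ! j) = \<mu> \<and> P ** \<phi> (zel j (snd (bs ! j))) ** matrix_inv P \<noteq> 0"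
    proof (intro exI conjI)
      show "j0 < length bs" "fst (bs ! j0) = \<mu>" using j0 by auto
      show "P ** \<phi> (zel j0 (snd (bs ! j0))) ** matrix_inv P \<noteq> 0"
      proof
        assume "P ** \<phi> (zel j0 (snd (bs ! j0))) ** matrix_inv P = 0"
        then have "P ** \<phi> (zel j0 (snd (bs ! j0))) = 0" unfolding cj by (simp add: mm_zero_l)
        then have "msc (G j0 (snd (bs!j0)) * t) Xp ** P = 0" using F(5) j0(1) r0 by auto
        then have "msc (G j0 (snd (bs!j0)) * t) Xp ** P ** matrix_inv P = 0" by (simp add: mm_zero_l)
        then have "msc (G j0 (snd (bs!j0)) * t) Xp = 0" by (simp add: matrix_mul_assoc[symmetric] minv[OF F(2)])
        then have "G j0 (snd (bs!j0)) * t = 0" by (simp add: mat2_eq Xp_nth)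
        then show False using j0(3) F(3) by simp
      qed
    qed
  qed
qed

lemma ffun_zero:
  assumes bs1: "\<forall>b \<in> set bs. 1 \<le> snd b" and hom: "hom bs \<phi>" and rep: "rep bs \<phi>" and nr1: "\<not> rep1 bs \<phi>"
  shows "ffun bs \<phi> = 0"
proof -
  obtain \<mu> P t G where F: "\<mu> \<noteq> 0" "invertible P" "t \<noteq> 0" "P ** \<phi> uel = msc (\<mu>/2) Hm ** P"
     "\<forall>j<length bs. \<forall>k. 1 \<le> k \<and> k \<le> snd (bs!j) \<longrightarrow> P ** \<phi> (zel j k) = msc (G j k * t) Xp ** P
         \<and> (fst (bs!j) \<noteq> \<mu> \<longrightarrow> G j k = 0) \<and> (k < snd (bs!j) \<longrightarrow> G j k = 0)"
     "\<exists>j<length bs. fst (bs!j) = \<mu> \<and> G j (snd (bs!j)) \<noteq> 0"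
    using forward[OF hom rep nr1] by blast
  obtain j0 where j0: "j0 < length bs" "fst (bs!j0) = \<mu>" using F(6) by blast
  have r0: "1 \<le> snd (bs!j0)" using bs1 j0(1) by simp
  have eig: "is_eigenvalue bs \<mu>" using eig_block[OF j0(1) r0] j0(2) by simp
  have "det P * det (\<phi> uel) = det (msc (\<mu>/2) Hm) * det P"
    using arg_cong[OF F(4), of det] by (simp add: det_mul)
  moreover have "det P \<noteq> 0" using F(2) invertible_det_nz by blast
  ultimately have "det (\<phi> uel) = det (msc (\<mu>/2) Hm)" by simp
  also have "\<dots> = - (\<mu>/2) * (\<mu>/2)" by (simp add: det_2 Hm_nth)
  finally have d: "det (\<phi> uel) + \<mu> ^ 2 / 4 = 0" by (simp add: power2_eq_square field_simps)
  show ?thesis unfolding ffun_def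
    by (rule prod_zero[OF eig_finite]) (use eig F(1) d in auto)
qed

lemma bad_rep:
  assumes bs1: "\<forall>b \<in> set bs. 1 \<le> snd b" and j: "j < length bs" "fst (bs!j) \<noteq> 0"
  shows "\<exists>\<phi>. rep bs \<phi> \<and> \<not> rep1 bs \<phi>"
proof -
  define l where "l = fst (bs!j)"
  define r where "r = snd (bs!j)"
  define \<phi> where "\<phi> x = msc (snd x * (l/2)) Hm + msc (fst x (j, r)) Xp" for x :: hel
  have hom: "hom bs \<phi>"
    unfolding hom_def
  proof (intro conjI ballI allI)
    fix x y assume "x \<in> hcar bs" "y \<in> hcar bs"
    show "\<phi> (hadd x y) = \<phi> x + \<phi> y" unfolding \<phi>_def
      by (subst mat2_eq) (simp add: hadd_def Hm_nth Xp_nth field_simps)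
  next
    fix a x assume "x \<in> hcar bs"
    show "\<phi> (hscale a x) = msc a (\<phi> x)" unfolding \<phi>_def
      by (subst mat2_eq) (simp add: hscale_def Hm_nth Xp_nth algebra_simps)
  next
    fix x assume "x \<in> hcar bs"
    show "trace (\<phi> x) = 0" unfolding \<phi>_def by (simp add: trace2 Hm_nth Xp_nth)
  qed
  have r1: "1 \<le> r" using bs1 j r_def by simp
  have "rep bs \<phi> \<and> \<not> rep1 bs \<phi>"
  proof (rule backward[OF bs1 hom, of 1 l "mat 1" \<phi>])
    show "(1::int) \<in> {1, -1}" by simp
    show "l \<noteq> 0" using j l_def by simp
    show "invertible (mat 1 :: mat2)" unfolding invertible_def by (rule exI[of _ "mat 1"]) simp
    show "\<phi> = (\<lambda>x. mat 1 ** \<phi> x ** matrix_inv (mat 1))" by (simp add: minv_1)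
    show "\<phi> uel = msc (l / (2 * of_int (1::int))) Hm" unfolding \<phi>_def
      by (subst mat2_eq) (simp add: uel_def Hm_nth Xp_nth)
    show "\<forall>j'<length bs. fst (bs ! j') \<noteq> l \<longrightarrow> (\<forall>k. 1 \<le> k \<and> k \<le> snd (bs ! j') \<longrightarrow> \<phi> (zel j' k) = 0)"
    proof (intro allI impI)
      fix j' k assume a: "j' < length bs" "fst (bs ! j') \<noteq> l" "1 \<le> k \<and> k \<le> snd (bs ! j')"
      then have "j' \<noteq> j" using l_def by auto
      then show "\<phi> (zel j' k) = 0" unfolding \<phi>_def by (simp add: zel_def)
    qed
    show "\<forall>j'<length bs. fst (bs ! j') = l \<longrightarrow> (\<exists>t::nat\<Rightarrow>complex. (\<forall>k. 1 \<le> k \<and> k \<le> snd (bs ! j') \<longrightarrow>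
              \<phi> (zel j' k) = msc (t k) (Xe 1)) \<and> (\<forall>k. 1 \<le> k \<and> k < snd (bs ! j') \<longrightarrow> t k = 0))"
    proof (intro allI impI)
      fix j' assume a: "j' < length bs" "fst (bs ! j') = l"
      show "\<exists>t::nat\<Rightarrow>complex. (\<forall>k. 1 \<le> k \<and> k \<le> snd (bs ! j') \<longrightarrow>
              \<phi> (zel j' k) = msc (t k) (Xe 1)) \<and> (\<forall>k. 1 \<le> k \<and> k < snd (bs ! j') \<longrightarrow> t k = 0)"
        apply (rule exI[of _ "\<lambda>k. if j' = j \<and> k = r then 1 else 0"])
        unfolding \<phi>_def by (auto simp: zel_def Xe_def r_def)
    qed
    show "\<exists>j'<length bs. fst (bs ! j') = l \<and> \<phi> (zel j' (snd (bs ! j'))) \<noteq> 0"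
    proof (intro exI conjI)
      show "j < length bs" "fst (bs ! j) = l" using j l_def by auto
      have "\<phi> (zel j (snd (bs ! j))) = Xp" unfolding \<phi>_def by (simp add: zel_def r_def)
      then show "\<phi> (zel j (snd (bs ! j))) \<noteq> 0" by (simp add: mat2_eq Xp_nth)
    qed
  qed
  then show ?thesis by blast
qed

lemma bwd_main:
  assumes bs1: "\<forall>b \<in> set bs. 1 \<le> snd b" and hom: "hom bs \<phi>"
  and R: "\<exists>l e P. is_eigenvalue bs l \<and> l \<noteq> 0 \<and> e \<in> {1, -1} \<and> invertible P \<and>
                   (let \<psi> = (\<lambda>x. P ** \<phi> x ** matrix_inv P) in
                     \<psi> uel = msc (l / (2 * of_int e)) Hm
                   \<and> (\<forall>j < length bs. fst (bs ! j) \<noteq> l \<longrightarrow>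
                        (\<forall>k. 1 \<le> k \<and> k \<le> snd (bs ! j) \<longrightarrow> \<psi> (zel j k) = 0))
                   \<and> (\<forall>j < length bs. fst (bs ! j) = l \<longrightarrow>
                        (\<exists>t :: nat \<Rightarrow> complex. (\<forall>k. 1 \<le> k \<and> k \<le> snd (bs ! j) \<longrightarrow>
                            \<psi> (zel j k) = msc (t k) (Xe e)) \<and>
                          (\<forall>k. 1 \<le> k \<and> k < snd (bs ! j) \<longrightarrow> t k = 0)))
                   \<and> (\<exists>j < length bs. fst (bs ! j) = l \<and> \<psi> (zel j (snd (bs ! j))) \<noteq> 0))"
  shows "rep bs \<phi> \<and> \<not> rep1 bs \<phi>"
proof -
  obtain l e P where a: "is_eigenvalue bs l" "l \<noteq> 0" "e \<in> {1, -1}" "invertible P" and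
    b: "(let \<psi> = (\<lambda>x. P ** \<phi> x ** matrix_inv P) in
                     \<psi> uel = msc (l / (2 * of_int e)) Hm
                   \<and> (\<forall>j < length bs. fst (bs ! j) \<noteq> l \<longrightarrow>
                        (\<forall>k. 1 \<le> k \<and> k \<le> snd (bs ! j) \<longrightarrow> \<psi> (zel j k) = 0))
                   \<and> (\<forall>j < length bs. fst (bs ! j) = l \<longrightarrow>
                        (\<exists>t :: nat \<Rightarrow> complex. (\<forall>k. 1 \<le> k \<and> k \<le> snd (bs ! j) \<longrightarrow>
                            \<psi> (zel j k) = msc (t k) (Xe e)) \<and>
                          (\<forall>k. 1 \<le> k \<and> k < snd (bs ! j) \<longrightarrow> t k = 0)))
                   \<and> (\<exists>j < length bs. fst (bs ! j) = l \<and> \<psi> (zel j (snd (bs ! j))) \<noteq> 0))"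
    using R by blast
  show ?thesis
    using b unfolding Let_def
    by (intro backward[OF bs1 hom a(3) a(2) a(4) refl]) auto
qed

lemma nil_rep:
  assumes bs1: "\<forall>b \<in> set bs. 1 \<le> snd b" and nil: "h_nilpotent bs"
  shows "rep bs \<phi> \<longleftrightarrow> rep1 bs \<phi>"
proof
  assume rep: "rep bs \<phi>"
  show "rep1 bs \<phi>"
  proof (rule ccontr)
    assume nr1: "\<not> rep1 bs \<phi>"
    have hom: "hom bs \<phi>" using rep by (simp add: rep_def)
    obtain \<mu> P t G where F: "\<mu> \<noteq> 0" "invertible P" "t \<noteq> 0" "P ** \<phi> uel = msc (\<mu>/2) Hm ** P"
       "\<forall>j<length bs. \<forall>k. 1 \<le> k \<and> k \<le> snd (bs!j) \<longrightarrow> P ** \<phi> (zel j k) = msc (G j k * t) Xp ** P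
           \<and> (fst (bs!j) \<noteq> \<mu> \<longrightarrow> G j k = 0) \<and> (k < snd (bs!j) \<longrightarrow> G j k = 0)"
       "\<exists>j<length bs. fst (bs!j) = \<mu> \<and> G j (snd (bs!j)) \<noteq> 0"
      using forward[OF hom rep nr1] by blast
    obtain j0 where j0: "j0 < length bs" "fst (bs!j0) = \<mu>" using F(6) by blast
    have "\<not> h_nilpotent bs" using notnil[OF j0(1)] bs1 j0 F(1) by simp
    then show False using nil by simp
  qed
next
  assume "rep1 bs \<phi>" then show "rep bs \<phi>" by (simp add: rep1_def)
qed

lemma all_rep_nil:
  assumes bs1: "\<forall>b \<in> set bs. 1 \<le> snd b" and all: "\<forall>\<phi>. rep bs \<phi> \<longleftrightarrow> rep1 bs \<phi>"
  shows "h_nilpotent bs"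
proof (cases "\<forall>j<length bs. fst (bs!j) = 0")
  case True then show ?thesis by (rule nil_of)
next
  case False
  then obtain j where "j < length bs" "fst (bs!j) \<noteq> 0" by blast
  then obtain \<phi> where "rep bs \<phi> \<and> \<not> rep1 bs \<phi>" using bad_rep[OF bs1] by blast
  then show ?thesis using all by blast
qed

theorem lemma4p2:
  fixes bs :: "(complex \<times> nat) list"
  assumes "\<forall>b \<in> set bs. 1 \<le> snd b"
  shows "(\<not> h_nilpotent bs \<longrightarrow>
           (\<forall>\<phi>. hom bs \<phi> \<longrightarrow>
              ((rep bs \<phi> \<and> \<not> rep1 bs \<phi>) \<longleftrightarrow>
                (\<exists>l e P. is_eigenvalue bs l \<and> l \<noteq> 0 \<and> e \<in> {1, -1} \<and> invertible P \<and>
                   (let \<psi> = (\<lambda>x. P ** \<phi> x ** matrix_inv P) in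
                     \<psi> uel = msc (l / (2 * of_int e)) Hm
                   \<and> (\<forall>j < length bs. fst (bs ! j) \<noteq> l \<longrightarrow>
                        (\<forall>k. 1 \<le> k \<and> k \<le> snd (bs ! j) \<longrightarrow> \<psi> (zel j k) = 0))
                   \<and> (\<forall>j < length bs. fst (bs ! j) = l \<longrightarrow>
                        (\<exists>t :: nat \<Rightarrow> complex. (\<forall>k. 1 \<le> k \<and> k \<le> snd (bs ! j) \<longrightarrow>
                            \<psi> (zel j k) = msc (t k) (Xe e)) \<and>
                          (\<forall>k. 1 \<le> k \<and> k < snd (bs ! j) \<longrightarrow> t k = 0)))
                   \<and> (\<exists>j < length bs. fst (bs ! j) = l \<and> \<psi> (zel j (snd (bs ! j))) \<noteq> 0))))
              \<and> (rep bs \<phi> \<and> \<not> rep1 bs \<phi> \<longrightarrow> ffun bs \<phi> = 0)))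
         \<and> ((\<forall>\<phi>. rep bs \<phi> \<longleftrightarrow> rep1 bs \<phi>) \<longleftrightarrow> h_nilpotent bs)"
proof -
  note bs1 = assms
  show ?thesis
    apply (rule conjI)
     apply (intro impI allI)
     apply (rule conjI)
      apply (rule iffI)
       apply (elim conjE)
       apply (rule RHS_of_forward[OF bs1]; assumption)
      apply (rule bwd_main[OF bs1]; assumption)
     apply (intro impI)
     apply (elim conjE)
     apply (rule ffun_zero[OF bs1]; assumption)
    apply (rule iffI)
     apply (rule all_rep_nil[OF bs1]; assumption)
    apply (intro allI)
    apply (rule nil_rep[OF bs1]; assumption)
    done
qed

end
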